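(* For every $N\ge 1$, the (free) Magnetic Tower of Hanoi puzzle with $N$ disks can be solved in $$S_{67}(N)=3^{N-1}+N-1$$ moves, by a solution in which disk $1$ moves once and disk $k$ moves $2\cdot 3^{k-2}+1$ times for $2\le k\le N$ (disks numbered $1,\dots,N$ from largest to smallest). Moreover $S_{67}(N)\big/\tfrac{3^N-1}{2}\to \tfrac23$ as $N\to\infty$.
   Context: Magnetic Tower of Hanoi (MToH): there are three posts and $N$ disks of distinct diameters, numbered $1$ (largest) to $N$ (smallest). Each disk has two faces, one Red and one Blue. Initially all $N$ disks are stacked on a source post $S$ in decreasing size from bottom to top, each with its Red face up. A move consists of lifting the top disk of some post, turning it upside down, and placing it on top of another post. Rules: (Size rule) a disk may never be placed on a smaller disk; (Magnet rule) a disk may never be placed so that its downward-facing side has the same color as the upward-facing side of the disk it lands on. An empty post accepts a disk in either orientation. The puzzle is solved when all $N$ disks are on a destination post $D$ (one of the two initially empty posts) in decreasing size from bottom to top. *)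

theory Defs
  imports Complex_Main
begin

text \<open>Posts are the natural numbers 0, 1, 2.  Disks are numbered 1 (largest) to N (smallest).
  A state maps each post to its stack, listed from top to bottom; each entry is
  (disk, colour of the upward face), where True = Red and False = Blue.\<close>

type_synonym mstate = "nat \<Rightarrow> (nat \<times> bool) list"
type_synonym mmove = "nat \<times> nat"

definition is_post :: "nat \<Rightarrow> bool" where
  "is_post p \<longleftrightarrow> p < 3"

definition init_state :: "nat \<Rightarrow> nat \<Rightarrow> mstate" where
  "init_state N S = (\<lambda>p. if p = S then map (\<lambda>k. (k, True)) (rev [1..<N+1]) else [])"

text \<open>If the lifted disk (d,c) has upward colour c, after flipping its downward face has
  colour c and its upward face colour \<not> c.\<close>
definition legal_move :: "mstate \<Rightarrow> mmove \<Rightarrow> bool" where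
  "legal_move s m = (case m of (p, q) \<Rightarrow>
     is_post p \<and> is_post q \<and> p \<noteq> q \<and> s p \<noteq> [] \<and>
     (case s q of [] \<Rightarrow> True
      | (d', c') # _ \<Rightarrow>
          d' < fst (hd (s p)) \<comment> \<open>size rule: lower disk is larger\<close>
          \<and> snd (hd (s p)) \<noteq> c' \<comment> \<open>magnet rule: downward face vs upward face below\<close>))"

definition apply_move :: "mstate \<Rightarrow> mmove \<Rightarrow> mstate" where
  "apply_move s m = (case m of (p, q) \<Rightarrow>
     (let (d, c) = hd (s p) in s(p := tl (s p), q := (d, \<not> c) # s q)))"

definition moved_disk :: "mstate \<Rightarrow> mmove \<Rightarrow> nat" where
  "moved_disk s m = fst (hd (s (fst m)))"

fun valid_seq :: "mstate \<Rightarrow> mmove list \<Rightarrow> bool" where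
  "valid_seq s [] = True"
| "valid_seq s (m # ms) = (legal_move s m \<and> valid_seq (apply_move s m) ms)"

fun disk_moves :: "nat \<Rightarrow> mstate \<Rightarrow> mmove list \<Rightarrow> nat" where
  "disk_moves k s [] = 0"
| "disk_moves k s (m # ms) =
     (if moved_disk s m = k then 1 else 0) + disk_moves k (apply_move s m) ms"

definition solved :: "nat \<Rightarrow> nat \<Rightarrow> mstate \<Rightarrow> bool" where
  "solved N D s \<longleftrightarrow> map fst (s D) = rev [1..<N+1] \<and> (\<forall>p. is_post p \<and> p \<noteq> D \<longrightarrow> s p = [])"

definition S67 :: "nat \<Rightarrow> nat" where
  "S67 N = 3 ^ (N - 1) + N - 1"

end

theory Submission
  imports Defs "HOL-Real_Asymp.Real_Asymp"
begin


definition run :: "mstate \<Rightarrow> mmove list \<Rightarrow> mstate \<Rightarrow> (nat \<Rightarrow> nat) \<Rightarrow> bool" where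
  "run s xs s' f \<longleftrightarrow> valid_seq s xs \<and> foldl apply_move s xs = s' \<and> (\<forall>k. disk_moves k s xs = f k)"

lemma valid_seq_append: "valid_seq s (xs @ ys) = (valid_seq s xs \<and> valid_seq (foldl apply_move s xs) ys)"
  by (induction xs arbitrary: s) auto

lemma disk_moves_append: "disk_moves k s (xs @ ys) = disk_moves k s xs + disk_moves k (foldl apply_move s xs) ys"
  by (induction xs arbitrary: s) auto

lemma run_append: "run s xs s1 f \<Longrightarrow> run s1 ys s2 g \<Longrightarrow> run s (xs @ ys) s2 (\<lambda>k. f k + g k)"
  unfolding run_def by (simp add: valid_seq_append disk_moves_append)

lemma run_cong: "run s xs s1 f \<Longrightarrow> s1 = s2 \<Longrightarrow> (\<And>k. f k = g k) \<Longrightarrow> run s xs s2 g"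
  unfolding run_def by simp

lemma run_nil: "run s [] s (\<lambda>k. 0)"
  unfolding run_def by simp

lemma run_single:
  assumes "p < 3" "q < 3" "p \<noteq> q" "s p = (d, u) # r" "s q = rq"
    "rq = [] \<or> (fst (hd rq) < d \<and> snd (hd rq) \<noteq> u)"
  shows "run s [(p,q)] (s(p := r, q := (d, \<not> u) # rq)) (\<lambda>k. if k = d then 1 else 0)"
proof -
  have "legal_move s (p,q)"
    using assms unfolding legal_move_def is_post_def
    by (cases rq) auto
  moreover have "apply_move s (p,q) = s(p := r, q := (d, \<not> u) # rq)"
    using assms unfolding apply_move_def by auto
  moreover have "moved_disk s (p,q) = d" using assms unfolding moved_disk_def by simp
  ultimately show ?thesis unfolding run_def by auto
qed

definition fits :: "nat \<Rightarrow> (nat \<times> bool) list \<Rightarrow> bool \<Rightarrow> bool" where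
  "fits m r x \<longleftrightarrow> r = [] \<or> (fst (hd r) \<le> m \<and> snd (hd r) = x)"

lemma fits_Suc: "fits m r x \<Longrightarrow> fits (Suc m) r x"
  unfolding fits_def by auto

lemma fits_top: "fits (Suc m) ((Suc m, x) # r) x"
  unfolding fits_def by auto

lemma run_big:
  assumes "p < 3" "q < 3" "p \<noteq> q" "s p = (Suc m, u) # r" "s q = rq" "fits m rq v" "v = (\<not> u)"
  shows "run s [(p,q)] (s(p := r, q := (Suc m, v) # rq)) (\<lambda>k. if k = Suc m then 1 else 0)"
  using assms run_single[of p q s "Suc m" u r rq] by (auto simp: fits_def)

definition tw :: "nat \<Rightarrow> nat \<Rightarrow> bool \<Rightarrow> (nat \<times> bool) list" where
  "tw m n c = map (\<lambda>k. (k, c)) (rev [m+1..<m+n+1])"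

lemma tw_0[simp]: "tw m 0 c = []" unfolding tw_def by simp

lemma tw_Suc: "tw m (Suc n) c = tw (Suc m) n c @ [(Suc m, c)]"
proof -
  have "[m+1..<m+Suc n+1] = (m+1) # [Suc m+1..<Suc m+n+1]"
    by (simp add: upt_rec)
  then show ?thesis unfolding tw_def by simp
qed

fun mvL :: "nat \<Rightarrow> nat \<Rightarrow> nat \<Rightarrow> nat \<Rightarrow> mmove list" where
  "mvL 0 a b c = []"
| "mvL (Suc n) a b c = mvL n a b c @ [(a,c)] @ mvL n b a c @ [(c,b)] @ mvL n a b c"

fun cL :: "nat \<Rightarrow> nat \<Rightarrow> nat \<Rightarrow> nat" where
  "cL m 0 k = 0"
| "cL m (Suc n) k = (if k = Suc m then 2 else 0) + 3 * cL (Suc m) n k"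

lemma L_ok:
  assumes "a < 3" "b < 3" "c < 3" "a \<noteq> b" "a \<noteq> c" "b \<noteq> c"
    "s a = tw m n col @ ra" "s b = rb" "s c = rc"
    "fits m ra col" "fits m rb col" "fits m rc (\<not> col)"
  shows "run s (mvL n a b c) (s(a := ra, b := tw m n col @ rb)) (cL m n)"
  using assms
proof (induction n arbitrary: m s ra rb rc a b c)
  case 0
  then show ?case by (auto intro!: run_cong[OF run_nil] simp: fun_eq_iff)
next
  case (Suc n)
  note IH = Suc.IH
  note h = Suc.prems
  define s1 where "s1 = s(a := (Suc m, col) # ra, b := tw (Suc m) n col @ rb)"
  have r1: "run s (mvL n a b c) s1 (cL (Suc m) n)"
    unfolding s1_def
    by (rule IH) (use h in \<open>auto simp: tw_Suc fits_Suc fits_top\<close>)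
  define s2 where "s2 = s1(a := ra, c := (Suc m, \<not> col) # rc)"
  have r2: "run s1 [(a,c)] s2 (\<lambda>k. if k = Suc m then 1 else 0)"
    unfolding s2_def
    by (rule run_big) (use h in \<open>auto simp: s1_def\<close>)
  define s3 where "s3 = s2(b := rb, a := tw (Suc m) n col @ ra)"
  have r3: "run s2 (mvL n b a c) s3 (cL (Suc m) n)"
    unfolding s3_def
    by (rule IH) (use h in \<open>auto simp: s1_def s2_def fits_Suc fits_top\<close>)
  define s4 where "s4 = s3(c := rc, b := (Suc m, col) # rb)"
  have r4: "run s3 [(c,b)] s4 (\<lambda>k. if k = Suc m then 1 else 0)"
    unfolding s4_def
    by (rule run_big) (use h in \<open>auto simp: s1_def s2_def s3_def\<close>)
  define s5 where "s5 = s4(a := ra, b := tw (Suc m) n col @ (Suc m, col) # rb)"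
  have r5: "run s4 (mvL n a b c) s5 (cL (Suc m) n)"
    unfolding s5_def
    by (rule IH) (use h in \<open>auto simp: s1_def s2_def s3_def s4_def fits_Suc fits_top\<close>)
  show ?case
    unfolding mvL.simps cL.simps
    apply (rule run_cong[OF run_append[OF r1 run_append[OF r2 run_append[OF r3 run_append[OF r4 r5]]]]])
    using h by (auto simp: s1_def s2_def s3_def s4_def s5_def fun_eq_iff tw_Suc)
qed

fun mvQ1 :: "nat \<Rightarrow> nat \<Rightarrow> nat \<Rightarrow> nat \<Rightarrow> mmove list" where
  "mvQ1 0 a b c = []"
| "mvQ1 (Suc n) a b c = mvQ1 n a c b @ [(a,b)] @ mvL n c b a"

fun mvQ2 :: "nat \<Rightarrow> nat \<Rightarrow> nat \<Rightarrow> nat \<Rightarrow> mmove list" where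
  "mvQ2 0 a b c = []"
| "mvQ2 (Suc n) a b c = mvL n a c b @ [(a,b)] @ mvQ2 n c b a"

fun mvG :: "nat \<Rightarrow> nat \<Rightarrow> nat \<Rightarrow> nat \<Rightarrow> mmove list" where
  "mvG 0 a b c = []"
| "mvG (Suc n) a b c = mvL n a b c @ [(a,c)] @ mvQ1 n b a c @ [(c,b)] @ mvQ2 n a b c"

fun mvF :: "nat \<Rightarrow> nat \<Rightarrow> nat \<Rightarrow> nat \<Rightarrow> mmove list" where
  "mvF 0 a b c = []"
| "mvF (Suc n) a b c = mvF n a c b @ [(a,b)] @ mvG n c b a"

fun cQ :: "nat \<Rightarrow> nat \<Rightarrow> nat \<Rightarrow> nat" where
  "cQ m 0 k = 0"
| "cQ m (Suc n) k = cQ (Suc m) n k + (if k = Suc m then 1 else 0) + cL (Suc m) n k"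

fun cG :: "nat \<Rightarrow> nat \<Rightarrow> nat \<Rightarrow> nat" where
  "cG m 0 k = 0"
| "cG m (Suc n) k = cL (Suc m) n k + (if k = Suc m then 2 else 0) + 2 * cQ (Suc m) n k"

fun cF :: "nat \<Rightarrow> nat \<Rightarrow> nat \<Rightarrow> nat" where
  "cF m 0 k = 0"
| "cF m (Suc n) k = cF (Suc m) n k + (if k = Suc m then 1 else 0) + cG (Suc m) n k"

lemma Q1_ok:
  assumes "a < 3" "b < 3" "c < 3" "a \<noteq> b" "a \<noteq> c" "b \<noteq> c"
    "s a = tw m n col @ ra" "s b = rb" "s c = rc"
    "fits m ra col" "fits m rb (\<not> col)" "fits m rc (\<not> col)"
  shows "run s (mvQ1 n a b c) (s(a := ra, b := tw m n (\<not> col) @ rb)) (cQ m n)"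
  using assms
proof (induction n arbitrary: m s ra rb rc a b c)
  case 0
  then show ?case by (auto intro!: run_cong[OF run_nil] simp: fun_eq_iff)
next
  case (Suc n)
  note IH = Suc.IH
  note h = Suc.prems
  define s1 where "s1 = s(a := (Suc m, col) # ra, c := tw (Suc m) n (\<not> col) @ rc)"
  have r1: "run s (mvQ1 n a c b) s1 (cQ (Suc m) n)"
    unfolding s1_def
    by (rule IH) (use h in \<open>auto simp: tw_Suc fits_Suc fits_top\<close>)
  define s2 where "s2 = s1(a := ra, b := (Suc m, \<not> col) # rb)"
  have r2: "run s1 [(a,b)] s2 (\<lambda>k. if k = Suc m then 1 else 0)"
    unfolding s2_def
    by (rule run_big) (use h in \<open>auto simp: s1_def\<close>)
  define s3 where "s3 = s2(c := rc, b := tw (Suc m) n (\<not> col) @ (Suc m, \<not> col) # rb)"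
  have r3: "run s2 (mvL n c b a) s3 (cL (Suc m) n)"
    unfolding s3_def
    by (rule L_ok) (use h in \<open>auto simp: s1_def s2_def fits_Suc fits_top\<close>)
  show ?case
    unfolding mvQ1.simps cQ.simps
    apply (rule run_cong[OF run_append[OF r1 run_append[OF r2 r3]]])
    using h by (auto simp: s1_def s2_def s3_def fun_eq_iff tw_Suc)
qed

lemma Q2_ok:
  assumes "a < 3" "b < 3" "c < 3" "a \<noteq> b" "a \<noteq> c" "b \<noteq> c"
    "s a = tw m n col @ ra" "s b = rb" "s c = rc"
    "fits m ra col" "fits m rb (\<not> col)" "fits m rc col"
  shows "run s (mvQ2 n a b c) (s(a := ra, b := tw m n (\<not> col) @ rb)) (cQ m n)"
  using assms
proof (induction n arbitrary: m s ra rb rc a b c)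
  case 0
  then show ?case by (auto intro!: run_cong[OF run_nil] simp: fun_eq_iff)
next
  case (Suc n)
  note IH = Suc.IH
  note h = Suc.prems
  define s1 where "s1 = s(a := (Suc m, col) # ra, c := tw (Suc m) n col @ rc)"
  have r1: "run s (mvL n a c b) s1 (cL (Suc m) n)"
    unfolding s1_def
    by (rule L_ok) (use h in \<open>auto simp: tw_Suc fits_Suc fits_top\<close>)
  define s2 where "s2 = s1(a := ra, b := (Suc m, \<not> col) # rb)"
  have r2: "run s1 [(a,b)] s2 (\<lambda>k. if k = Suc m then 1 else 0)"
    unfolding s2_def
    by (rule run_big) (use h in \<open>auto simp: s1_def\<close>)
  define s3 where "s3 = s2(c := rc, b := tw (Suc m) n (\<not> col) @ (Suc m, \<not> col) # rb)"
  have r3: "run s2 (mvQ2 n c b a) s3 (cQ (Suc m) n)"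
    unfolding s3_def
    by (rule IH) (use h in \<open>auto simp: s1_def s2_def fits_Suc fits_top\<close>)
  show ?case
    unfolding mvQ2.simps cQ.simps
    apply (rule run_cong[OF run_append[OF r1 run_append[OF r2 r3]]])
    using h by (auto simp: s1_def s2_def s3_def fun_eq_iff tw_Suc)
qed

lemma G_ok:
  assumes "a < 3" "b < 3" "c < 3" "a \<noteq> b" "a \<noteq> c" "b \<noteq> c"
    "s a = tw m n col" "s b = rb" "s c = rc"
    "fits m rb col" "fits m rc (\<not> col)"
  shows "run s (mvG n a b c) (s(a := [], b := tw m n col @ rb)) (cG m n)"
proof (cases n)
  case 0
  then show ?thesis using assms by (auto intro!: run_cong[OF run_nil] simp: fun_eq_iff)
next
  case (Suc n)
  note h = assms
  define s1 where "s1 = s(a := [(Suc m, col)], b := tw (Suc m) n col @ rb)"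
  have r1: "run s (mvL n a b c) s1 (cL (Suc m) n)"
    unfolding s1_def
    by (rule L_ok) (use h Suc in \<open>auto simp: tw_Suc fits_Suc fits_top\<close>)
  define s2 where "s2 = s1(a := [], c := (Suc m, \<not> col) # rc)"
  have r2: "run s1 [(a,c)] s2 (\<lambda>k. if k = Suc m then 1 else 0)"
    unfolding s2_def
    by (rule run_big) (use h in \<open>auto simp: s1_def\<close>)
  define s3 where "s3 = s2(b := rb, a := tw (Suc m) n (\<not> col) @ [])"
  have r3: "run s2 (mvQ1 n b a c) s3 (cQ (Suc m) n)"
    unfolding s3_def
    by (rule Q1_ok) (use h in \<open>auto simp: s1_def s2_def fits_Suc fits_top fits_def\<close>)
  define s4 where "s4 = s3(c := rc, b := (Suc m, col) # rb)"
  have r4: "run s3 [(c,b)] s4 (\<lambda>k. if k = Suc m then 1 else 0)"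
    unfolding s4_def
    by (rule run_big) (use h in \<open>auto simp: s1_def s2_def s3_def\<close>)
  define s5 where "s5 = s4(a := [], b := tw (Suc m) n (\<not> \<not> col) @ (Suc m, col) # rb)"
  have r5: "run s4 (mvQ2 n a b c) s5 (cQ (Suc m) n)"
    unfolding s5_def
    by (rule Q2_ok) (use h in \<open>auto simp: s1_def s2_def s3_def s4_def fits_Suc fits_top fits_def\<close>)
  show ?thesis
    unfolding Suc mvG.simps cG.simps
    apply (rule run_cong[OF run_append[OF r1 run_append[OF r2 run_append[OF r3 run_append[OF r4 r5]]]]])
    using h by (auto simp: s1_def s2_def s3_def s4_def s5_def fun_eq_iff tw_Suc)
qed

lemma F_ok:
  assumes "a < 3" "b < 3" "c < 3" "a \<noteq> b" "a \<noteq> c" "b \<noteq> c"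
    "s a = tw m n col @ ra" "s b = []" "s c = []" "fits m ra col"
  shows "run s (mvF n a b c) (s(a := ra, b := tw m n (\<not> col))) (cF m n)"
  using assms
proof (induction n arbitrary: m s ra a b c)
  case 0
  then show ?case by (auto intro!: run_cong[OF run_nil] simp: fun_eq_iff)
next
  case (Suc n)
  note IH = Suc.IH
  note h = Suc.prems
  define s1 where "s1 = s(a := (Suc m, col) # ra, c := tw (Suc m) n (\<not> col))"
  have r1: "run s (mvF n a c b) s1 (cF (Suc m) n)"
    unfolding s1_def
    by (rule IH) (use h in \<open>auto simp: tw_Suc fits_Suc fits_top\<close>)
  define s2 where "s2 = s1(a := ra, b := [(Suc m, \<not> col)])"
  have r2: "run s1 [(a,b)] s2 (\<lambda>k. if k = Suc m then 1 else 0)"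
    unfolding s2_def
    by (rule run_big) (use h in \<open>auto simp: s1_def fits_def\<close>)
  define s3 where "s3 = s2(c := [], b := tw (Suc m) n (\<not> col) @ [(Suc m, \<not> col)])"
  have r3: "run s2 (mvG n c b a) s3 (cG (Suc m) n)"
    unfolding s3_def
    by (rule G_ok) (use h in \<open>auto simp: s1_def s2_def fits_Suc fits_top fits_def\<close>)
  show ?case
    unfolding mvF.simps cF.simps
    apply (rule run_cong[OF run_append[OF r1 run_append[OF r2 r3]]])
    using h by (auto simp: s1_def s2_def s3_def fun_eq_iff tw_Suc)
qed


lemma aux: "Suc m < k \<Longrightarrow> \<exists>d. k = m + 2 + d" by presburger


lemma cL_closed: "cL m n k = (if m < k \<and> k \<le> m + n then 2 * 3 ^ (k - m - 1) else 0)"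
proof (induction n arbitrary: m)
  case 0 then show ?case by simp
next
  case (Suc n)
  show ?case
  proof (cases "Suc m < k")
    case True
    then obtain d where "k = m + 2 + d" using aux by blast
    then show ?thesis using Suc by auto
  qed (use Suc in auto)
qed

lemma cQ_closed: "cQ m n k = (if m < k \<and> k \<le> m + n then 3 ^ (k - m - 1) else 0)"
proof (induction n arbitrary: m)
  case 0 then show ?case by simp
next
  case (Suc n)
  show ?case
  proof (cases "Suc m < k")
    case True
    then obtain d where "k = m + 2 + d" using aux by blast
    then show ?thesis using Suc by (auto simp: cL_closed)
  qed (use Suc in \<open>auto simp: cL_closed\<close>)
qed

lemma cG_closed: "cG m n k = (if m < k \<and> k \<le> m + n then (if k = Suc m then 2 else 4 * 3 ^ (k - m - 2)) else 0)"
proof (cases n)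
  case 0 then show ?thesis by simp
next
  case (Suc n)
  show ?thesis
  proof (cases "Suc m < k")
    case True
    then obtain d where "k = m + 2 + d" using aux by blast
    then show ?thesis using Suc by (auto simp: cL_closed cQ_closed)
  qed (use Suc in \<open>auto simp: cL_closed cQ_closed\<close>)
qed

lemma cF_closed: "cF m n k = (if m < k \<and> k \<le> m + n then (if k = Suc m then 1 else 2 * 3 ^ (k - m - 2) + 1) else 0)"
proof (induction n arbitrary: m)
  case 0 then show ?case by simp
next
  case (Suc n)
  show ?case
  proof (cases "Suc m < k")
    case True
    then obtain d where d: "k = m + 2 + d" using aux by blast
    show ?thesis
    proof (cases d)
      case 0 then show ?thesis using Suc d by (auto simp: cG_closed)
    next
      case (Suc e) then show ?thesis using Suc.IH d by (auto simp: cG_closed)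
    qed
  qed (use Suc in \<open>auto simp: cG_closed\<close>)
qed

lemma len_L: "length (mvL n a b c) + 1 = 3 ^ n"
proof (induction n arbitrary: a b c)
  case (Suc n)
  have "length (mvL (Suc n) a b c) = length (mvL n a b c) + length (mvL n b a c) + length (mvL n a b c) + 2" by simp
  then show ?case using Suc.IH[of a b c] Suc.IH[of b a c] unfolding power_Suc by linarith
qed simp

lemma len_Q1: "2 * length (mvQ1 n a b c) + 1 = 3 ^ n"
proof (induction n arbitrary: a b c)
  case (Suc n)
  have "length (mvQ1 (Suc n) a b c) = length (mvL n c b a) + length (mvQ1 n a c b) + 1" by simp
  then show ?case using len_L[of n c b a] Suc.IH[of a c b] unfolding power_Suc by linarith
qed simp

lemma len_Q2: "2 * length (mvQ2 n a b c) + 1 = 3 ^ n"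
proof (induction n arbitrary: a b c)
  case (Suc n)
  have "length (mvQ2 (Suc n) a b c) = length (mvL n a c b) + length (mvQ2 n c b a) + 1" by simp
  then show ?case using len_L[of n a c b] Suc.IH[of c b a] unfolding power_Suc by linarith
qed simp

lemma len_G: "length (mvG (Suc n) a b c) = 2 * 3 ^ n"
  using len_L[of n a b c] len_Q1[of n b a c] len_Q2[of n a b c] by simp

lemma len_F: "length (mvF (Suc n) a b c) = 3 ^ n + n"
proof (induction n arbitrary: a b c)
  case 0 then show ?case by simp
next
  case (Suc n)
  have "mvF (Suc (Suc n)) a b c = mvF (Suc n) a c b @ [(a,b)] @ mvG (Suc n) c b a" by simp
  then show ?case using Suc[of a c b] len_G[of n c b a] by simp
qed

lemma limit_part: "(\<lambda>N. real (S67 N) / ((3 ^ N - 1) / 2)) \<longlonglongrightarrow> 2 / 3"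
proof -
  have lim: "(\<lambda>N::nat. 2*((3::real)^N/3 + real N - 1)/(3^N - 1)) \<longlonglongrightarrow> 2/3"
    by real_asymp
  have ev: "\<forall>\<^sub>F N in sequentially. 2*((3::real)^N/3 + real N - 1)/(3^N - 1) = real (S67 N) / ((3 ^ N - 1) / 2)"
    using eventually_ge_at_top[of "1::nat"]
  proof eventually_elim
    case (elim N)
    then obtain n where N: "N = Suc n" by (cases N) auto
    have "real (S67 N) = 3 ^ n + real n" unfolding S67_def N by simp
    also have "... = (3::real)^N/3 + real N - 1" unfolding N by simp
    finally show ?case by simp
  qed
  show ?thesis using Lim_transform_eventually[OF lim ev] .
qed



theorem mainTheorem2:
  shows "(\<forall>N S D. N \<ge> 1 \<and> is_post S \<and> is_post D \<and> S \<noteq> D \<longrightarrow>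
           (\<exists>ms. valid_seq (init_state N S) ms
              \<and> solved N D (foldl apply_move (init_state N S) ms)
              \<and> length ms = S67 N
              \<and> disk_moves 1 (init_state N S) ms = 1
              \<and> (\<forall>k. 2 \<le> k \<and> k \<le> N \<longrightarrow> disk_moves k (init_state N S) ms = 2 * 3 ^ (k - 2) + 1)))
       \<and> (\<lambda>N. real (S67 N) / ((3 ^ N - 1) / 2)) \<longlonglongrightarrow> 2 / 3"
proof (intro conjI allI impI)
  fix N S D :: nat
  assume as: "N \<ge> 1 \<and> is_post S \<and> is_post D \<and> S \<noteq> D"
  then have S: "S < 3" and D: "D < 3" and SD: "S \<noteq> D" and N: "N \<ge> 1"
    by (auto simp: is_post_def)
  define I where "I = 3 - S - D"
  have I: "I < 3" "I \<noteq> S" "I \<noteq> D"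
    using S D SD unfolding I_def by arith+
  define s where "s = init_state N S"
  have sS: "s S = tw 0 N True @ []" unfolding s_def init_state_def tw_def by simp
  have sD: "s D = []" and sI: "s I = []" using SD I unfolding s_def init_state_def by auto
  have r: "run s (mvF N S D I) (s(S := [], D := tw 0 N (\<not> True))) (cF 0 N)"
    by (rule F_ok) (use S D SD I sS sD sI in \<open>auto simp: fits_def\<close>)
  obtain n where Nn: "N = Suc n" using N by (cases N) auto
  show "\<exists>ms. valid_seq (init_state N S) ms
              \<and> solved N D (foldl apply_move (init_state N S) ms)
              \<and> length ms = S67 N
              \<and> disk_moves 1 (init_state N S) ms = 1
              \<and> (\<forall>k. 2 \<le> k \<and> k \<le> N \<longrightarrow> disk_moves k (init_state N S) ms = 2 * 3 ^ (k - 2) + 1)"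
  proof (intro exI conjI allI impI)
    show "valid_seq (init_state N S) (mvF N S D I)" using r unfolding run_def s_def by simp
    show "solved N D (foldl apply_move (init_state N S) (mvF N S D I))"
      using r SD unfolding run_def s_def[symmetric] solved_def
      by (auto simp: tw_def comp_def sI s_def init_state_def)
    show "length (mvF N S D I) = S67 N" unfolding Nn len_F S67_def by simp
    show "disk_moves 1 (init_state N S) (mvF N S D I) = 1"
      using r N unfolding run_def s_def by (simp add: cF_closed)
    fix k assume "2 \<le> k \<and> k \<le> N"
    then show "disk_moves k (init_state N S) (mvF N S D I) = 2 * 3 ^ (k - 2) + 1"
      using r unfolding run_def s_def by (simp add: cF_closed)
  qed
next
  show "(\<lambda>N. real (S67 N) / ((3 ^ N - 1) / 2)) \<longlonglongrightarrow> 2 / 3" by (rule limit_part)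
qed

end
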